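(* Let $N\geq1$, $q=2^N$, let $\pi$ be a permutation of $q$ symbols and let $(I,F_\pi)$ be the rotated odometer $F_\pi=\mathfrak{a}\circ R_\pi$ on $I=[0,1)$. Let $I_{per}$ be the set of periodic points of $F_\pi$ and $I_{np}=I\setminus I_{per}$. Then: (i) every point of $I_{per}$ is periodic, and the restriction $F_\pi:I_{per}\to I_{per}$ is well-defined and invertible; (ii) if $I_{per}$ is non-empty, then $I_{per}$ is a finite union of half-open maximal periodic intervals $[x,y)$, $x,y\in I$; thus the set of periods of points of $(I,F_\pi)$ is finite; (iii) $0\in I_{np}$, and $F_\pi:I_{np}\to I_{np}$ is well-defined and invertible at every point of $I_{np}\setminus\{0\}$; (iv) the system $(I_{np},F_\pi)$ is minimal.
   Context: The von Neumann–Kakutani map $\mathfrak{a}:[0,1)\to[0,1)$ is $\mathfrak{a}(x)=x-(1-3\cdot 2^{-n})$ if $x\in[1-2^{1-n},1-2^{-n})$, $n\geq1$. For $q\in\mathbb{N}$ divide $I=[0,1)$ into the $q$ intervals $[k/q,(k+1)/q)$, $0\le k<q$; for a permutation $\pi$ of $q$ symbols, $R_\pi:I\to I$ is the interval exchange translating $[k/q,(k+1)/q)$ onto $[\pi(k)/q,(\pi(k)+1)/q)$. The rotated odometer is $F_\pi=\mathfrak{a}\circ R_\pi$. *)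

theory Defs
  imports "HOL-Analysis.Analysis" "HOL-Combinatorics.Permutations"
begin

definition unitI :: "real set" where
  "unitI = {0..<1}"

text \<open>The von Neumann--Kakutani map: on [1 - 2^(1-n), 1 - 2^(-n)), n >= 1,
  it is x - (1 - 3 * 2^(-n)).  Outside [0,1) it is (irrelevantly) the identity.\<close>
definition vnk_piece :: "nat \<Rightarrow> real \<Rightarrow> bool" where
  "vnk_piece n x \<longleftrightarrow> n \<ge> 1 \<and> 1 - 2 / 2 ^ n \<le> x \<and> x < 1 - 1 / 2 ^ n"

definition vnk :: "real \<Rightarrow> real" where
  "vnk x = (if \<exists>n. vnk_piece n x
            then x - (1 - 3 / 2 ^ (THE n. vnk_piece n x))
            else x)"

text \<open>The interval exchange R_pi: translates [k/q,(k+1)/q) onto [pi k/q,(pi k+1)/q).\<close>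
definition Rexch :: "nat \<Rightarrow> (nat \<Rightarrow> nat) \<Rightarrow> real \<Rightarrow> real" where
  "Rexch q \<pi> x = (if x \<in> unitI
      then x + (real (\<pi> (nat \<lfloor>real q * x\<rfloor>)) - real (nat \<lfloor>real q * x\<rfloor>)) / real q
      else x)"

definition Frot :: "nat \<Rightarrow> (nat \<Rightarrow> nat) \<Rightarrow> real \<Rightarrow> real" where
  "Frot q \<pi> = vnk \<circ> Rexch q \<pi>"

definition periodic_pt :: "(real \<Rightarrow> real) \<Rightarrow> real \<Rightarrow> bool" where
  "periodic_pt F x \<longleftrightarrow> (\<exists>n>0. (F ^^ n) x = x)"

definition min_period :: "(real \<Rightarrow> real) \<Rightarrow> real \<Rightarrow> nat" where
  "min_period F x = (LEAST n. n > 0 \<and> (F ^^ n) x = x)"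

definition Iper :: "(real \<Rightarrow> real) \<Rightarrow> real set" where
  "Iper F = {x \<in> unitI. periodic_pt F x}"

definition Inp :: "(real \<Rightarrow> real) \<Rightarrow> real set" where
  "Inp F = unitI - Iper F"

definition periodic_interval :: "(real \<Rightarrow> real) \<Rightarrow> real \<Rightarrow> real \<Rightarrow> bool" where
  "periodic_interval F x y \<longleftrightarrow> x < y \<and> {x..<y} \<subseteq> Iper F \<and>
     (\<forall>u\<in>{x..<y}. \<forall>v\<in>{x..<y}. min_period F u = min_period F v)"

definition max_periodic_interval :: "(real \<Rightarrow> real) \<Rightarrow> real \<Rightarrow> real \<Rightarrow> bool" where
  "max_periodic_interval F x y \<longleftrightarrow> periodic_interval F x y \<and>
     (\<forall>x' y'. periodic_interval F x' y' \<and> {x..<y} \<subseteq> {x'..<y'} \<longrightarrow> {x'..<y'} = {x..<y})"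

definition minimal_on :: "real set \<Rightarrow> (real \<Rightarrow> real) \<Rightarrow> bool" where
  "minimal_on S F \<longleftrightarrow> F ` S \<subseteq> S \<and> (\<forall>x\<in>S. S \<subseteq> closure (range (\<lambda>n. (F ^^ n) x)))"

end

theory Submission
  imports Defs
begin


definition cell :: "nat \<Rightarrow> nat \<Rightarrow> real \<Rightarrow> bool" where
  "cell m k x \<longleftrightarrow> real k / 2 ^ m \<le> x \<and> x < (real k + 1) / 2 ^ m"

definition cidx :: "nat \<Rightarrow> real \<Rightarrow> nat" where
  "cidx m x = nat \<lfloor>2 ^ m * x\<rfloor>"

lemma cell_iff: "cell m k x \<longleftrightarrow> real k \<le> 2^m * x \<and> 2^m * x < real k + 1"
  unfolding cell_def by (simp add: field_simps)

lemma cidx_cell: "0 \<le> x \<Longrightarrow> cell m (cidx m x) x"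
proof -
  assume x: "0 \<le> x"
  have t: "0 \<le> 2^m * x" using x by simp
  then have e: "real (nat \<lfloor>2 ^ m * x\<rfloor>) = of_int \<lfloor>2 ^ m * x\<rfloor>" by simp
  show ?thesis unfolding cell_iff cidx_def e
    using of_int_floor_le[of "2^m*x"] real_of_int_floor_add_one_gt[of "2^m*x"] by simp
qed

lemma cell_cidx: "cell m k x \<Longrightarrow> cidx m x = k"
proof -
  assume "cell m k x"
  then have "\<lfloor>2 ^ m * x\<rfloor> = int k" unfolding cell_iff by (intro floor_unique) auto
  then show ?thesis unfolding cidx_def by simp
qed

lemma cell_nonneg: "cell m k x \<Longrightarrow> 0 \<le> x"
proof -
  assume "cell m k x"
  moreover have "0 \<le> real k / 2 ^ m" by simp
  ultimately show ?thesis unfolding cell_def by linarith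
qed

lemma cell_lt: "cell m k x \<Longrightarrow> x < 1 \<Longrightarrow> k < 2 ^ m"
proof -
  assume "cell m k x" "x < 1"
  moreover have "2^m * x < 2^m" using \<open>x < 1\<close> by simp
  ultimately have "real k < 2^m" unfolding cell_iff by linarith
  then show ?thesis by (metis of_nat_less_iff of_nat_numeral of_nat_power)
qed

lemma cell_lt1: "cell m k x \<Longrightarrow> k < 2 ^ m \<Longrightarrow> x < 1"
proof -
  assume "cell m k x" "k < 2 ^ m"
  then have "real k + 1 \<le> 2^m" by (metis Suc_leI of_nat_Suc of_nat_le_iff of_nat_numeral of_nat_power add.commute)
  then have "(real k + 1) / 2^m \<le> 1" by simp
  with \<open>cell m k x\<close> show ?thesis unfolding cell_def by linarith
qed

lemma cidx_lt: "0 \<le> x \<Longrightarrow> x < 1 \<Longrightarrow> cidx m x < 2 ^ m"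
  using cidx_cell cell_lt by blast

lemma cell_left: "cell m k (real k / 2 ^ m)"
  unfolding cell_def by (simp add: divide_strict_right_mono)

lemma grid_le: "cell m k x \<Longrightarrow> (real_of_int i / 2^m \<le> x \<longleftrightarrow> i \<le> int k)"
proof -
  assume c: "cell m k x"
  have "real_of_int i / 2^m \<le> x \<longleftrightarrow> real_of_int i \<le> 2^m * x" by (simp add: field_simps)
  also have "\<dots> \<longleftrightarrow> i \<le> int k"
  proof
    assume "real_of_int i \<le> 2^m * x"
    then have "real_of_int i < real_of_int (int k + 1)" using c unfolding cell_iff by simp
    then have "i < int k + 1" by (simp only: of_int_less_iff)
    then show "i \<le> int k" by simp
  next
    assume "i \<le> int k"
    then have "real_of_int i \<le> real_of_int (int k)" by (simp only: of_int_le_iff)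
    then show "real_of_int i \<le> 2^m * x" using c unfolding cell_iff by simp
  qed
  finally show ?thesis .
qed

lemma grid_less: "cell m k x \<Longrightarrow> (x < real_of_int i / 2^m \<longleftrightarrow> int k < i)"
  using grid_le[of m k x i] by linarith

lemma cell_shift: "cell m k x \<Longrightarrow> int k + d \<ge> 0 \<Longrightarrow> cell m (nat (int k + d)) (x + real_of_int d / 2^m)"
  unfolding cell_iff by (simp add: algebra_simps)

lemma cell_div: assumes "cell m k x" "n \<le> m" shows "cell n (k div 2^(m-n)) x"
proof -
  define d where "d = (2::nat)^(m-n)"
  have m: "(2::real)^m = 2^n * real d" unfolding d_def
    by (metis assms(2) le_add_diff_inverse of_nat_numeral of_nat_power power_add)
  have d0: "d > 0" unfolding d_def by simp
  have a: "(k div d) * d \<le> k" by simp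
  have b: "k < (k div d + 1) * d" using d0
    by (metis add.commute div_mult_mod_eq mod_less_divisor mult_Suc nat_add_left_cancel_less plus_1_eq_Suc)
  have a': "real (k div d) * real d \<le> real k" using a by (metis of_nat_le_iff of_nat_mult)
  have b': "real k + 1 \<le> (real (k div d) + 1) * real d" using b
    by (metis Suc_leI of_nat_1 of_nat_Suc of_nat_add of_nat_le_iff of_nat_mult add.commute)
  have "real k \<le> 2^m * x" "2^m * x < real k + 1" using assms(1) unfolding cell_iff by auto
  moreover have e: "2^m*x = (2^n*x)*real d" using m by simp
  ultimately have "real (k div d) * real d \<le> (2^n * x) * real d" "(2^n * x) * real d < (real (k div d) + 1) * real d"
    using a' b' by linarith+
  then have "real (k div d) \<le> 2^n * x" "2^n * x < real (k div d) + 1" using d0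
    by (simp_all add: mult_le_cancel_right mult_less_cancel_right)
  then show ?thesis unfolding cell_iff d_def by simp
qed




lemma pow_div_shift: "n \<le> m \<Longrightarrow> (c::real) / 2^n = c * 2^(m-n) / 2^m"
proof -
  assume "n \<le> m"
  then have "(2::real)^m = 2^n * 2^(m-n)" by (metis le_add_diff_inverse power_add)
  then show ?thesis by (simp add: field_simps)
qed

lemma pow2_le_div: "n < n' \<Longrightarrow> (2::real) / 2^n' \<le> 1 / 2^n"
proof -
  assume "n < n'"
  then have "(2::real)^(Suc n) \<le> 2^n'" by (intro power_increasing) auto
  then show ?thesis by (simp add: field_simps)
qed

lemma piece_unique: "vnk_piece n x \<Longrightarrow> vnk_piece n' x \<Longrightarrow> n = n'"
proof (rule ccontr)
  assume a: "vnk_piece n x" "vnk_piece n' x" "n \<noteq> n'"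
  show False
  proof (cases "n < n'")
    case True
    then show ?thesis using a pow2_le_div[of n n'] unfolding vnk_piece_def by linarith
  next
    case False
    then have "n' < n" using a by auto
    then show ?thesis using a pow2_le_div[of n' n] unfolding vnk_piece_def by linarith
  qed
qed

lemma vnk_eq: "vnk_piece n x \<Longrightarrow> vnk x = x - 1 + 3 / 2^n"
proof -
  assume a: "vnk_piece n x"
  have "(THE n. vnk_piece n x) = n" using a piece_unique by blast
  then show ?thesis using a unfolding vnk_def by auto
qed

lemma piece_exists: assumes "0 \<le> x" "x < 1" shows "\<exists>n. vnk_piece n x"
proof -
  obtain n0 where n0: "(1/2::real)^n0 < 1 - x" using real_arch_pow_inv[of "1-x" "1/2"] assms by auto
  define P where "P n \<longleftrightarrow> x < 1 - 1/(2::real)^n" for n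
  have "P n0" using n0 unfolding P_def by (simp add: power_divide)
  define n where "n = (LEAST n. P n)"
  have Pn: "P n" unfolding n_def using \<open>P n0\<close> by (rule LeastI)
  have n1: "n \<ge> 1" using Pn assms unfolding P_def by (cases n) auto
  have "\<not> P (n - 1)" unfolding n_def by (rule not_less_Least) (use n1 n_def in simp)
  then have "1 - 1 / 2^(n-1) \<le> x" unfolding P_def by simp
  moreover have "(1::real) / 2^(n-1) = 2 / 2^n" using n1 by (cases n) auto
  ultimately show ?thesis using Pn n1 unfolding vnk_piece_def P_def by auto
qed

lemma vnk_range: "vnk_piece n x \<Longrightarrow> 1/2^n \<le> vnk x \<and> vnk x < 2/2^n"
  using vnk_eq[of n x] unfolding vnk_piece_def by auto

lemma vnk_01: assumes "0 \<le> x" "x < 1" shows "0 < vnk x" "vnk x < 1"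
proof -
  obtain n where n: "vnk_piece n x" using piece_exists assms by blast
  have "n \<ge> 1" using n unfolding vnk_piece_def by simp
  then have "(2::real)^1 \<le> 2^n" by (intro power_increasing) auto
  then have "(2::real) / 2^n \<le> 1" by simp
  moreover have "(0::real) < 1/2^n" by simp
  ultimately show "0 < vnk x" "vnk x < 1" using vnk_range[OF n] by linarith+
qed

lemma vnk_cell: assumes "k + 1 < 2^m" "cell m k x" shows "vnk x = x + (vnk (real k/2^m) - real k/2^m)"
proof -
  have ck: "cell m k (real k / 2^m)" by (rule cell_left)
  have "k + 2 \<le> 2^m" using assms(1) by simp
  then have "real (k + 2) \<le> real (2^m)" by (simp only: of_nat_le_iff)
  then have kr: "real k + 1 \<le> 2^m - 1" by simp
  have ub: "y < 1 - 1/2^m" if "cell m k y" for y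
  proof -
    have "y < (real k + 1)/2^m" using that unfolding cell_def by simp
    also have "\<dots> \<le> (2^m - 1)/2^m" using kr by (simp add: divide_right_mono)
    also have "\<dots> = 1 - 1/2^m" by (simp add: field_simps)
    finally show ?thesis .
  qed
  have eq: "vnk_piece n x = vnk_piece n (real k / 2^m)" for n
  proof (cases "n = 0")
    case True then show ?thesis unfolding vnk_piece_def by simp
  next
    case False
    show ?thesis
    proof (cases "n \<le> m")
      case True
      define i1 :: int where "i1 = 2^m - 2 * 2^(m-n)"
      define i2 :: int where "i2 = 2^m - 2^(m-n)"
      have "real_of_int i1 / (2::real)^m = (2^m - 2*2^(m-n))/2^m" by (simp add: i1_def)
      also have "\<dots> = 1 - 2*2^(m-n)/2^m" by (simp add: diff_divide_distrib)
      also have "\<dots> = 1 - 2/2^n" using pow_div_shift[OF True, of 2] by simp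
      finally have e1: "1 - 2 / 2^n = real_of_int i1 / (2::real)^m" by simp
      have "real_of_int i2 / (2::real)^m = (2^m - 2^(m-n))/2^m" by (simp add: i2_def)
      also have "\<dots> = 1 - 2^(m-n)/2^m" by (simp add: diff_divide_distrib)
      also have "\<dots> = 1 - 1/2^n" using pow_div_shift[OF True, of 1] by simp
      finally have e2: "1 - 1 / 2^n = real_of_int i2 / (2::real)^m" by simp
      show ?thesis unfolding vnk_piece_def e1 e2
        by (simp only: grid_le[OF assms(2)] grid_less[OF assms(2)] grid_le[OF ck] grid_less[OF ck])
    next
      case False
      then have "(2::real)/2^n \<le> 1/2^m" using pow2_le_div[of m n] by simp
      then show ?thesis using ub[OF assms(2)] ub[OF ck] unfolding vnk_piece_def by auto
    qed
  qed
  then have "(\<lambda>n. vnk_piece n x) = (\<lambda>n. vnk_piece n (real k / 2^m))" by auto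
  then show ?thesis unfolding vnk_def by (simp add: algebra_simps)
qed




lemma two_div_le1: "n \<ge> 1 \<Longrightarrow> (2::real) / 2^n \<le> 1"
proof -
  assume "n \<ge> 1"
  then have "(2::real)^1 \<le> 2^n" by (intro power_increasing) auto
  then show ?thesis by simp
qed

lemma vnk_grid: assumes "k + 1 < 2^m" shows "\<exists>j. vnk (real k/2^m) = real j/2^m \<and> 1 \<le> j \<and> j < 2^m"
proof -
  define y where "y = real k / 2^m"
  have ck: "cell m k y" unfolding y_def by (rule cell_left)
  have y0: "0 \<le> y" "y < 1" using ck cell_nonneg cell_lt1 assms by auto
  obtain n where n: "vnk_piece n y" using piece_exists y0 by blast
  have nm: "n \<le> m"
  proof (rule ccontr)
    assume "\<not> n \<le> m"
    then have "(2::real)/2^n \<le> 1/2^m" using pow2_le_div[of m n] by simp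
    then have "1 - 1/2^m \<le> y" using n unfolding vnk_piece_def by linarith
    moreover have "1 - 1/(2::real)^m = real_of_int (2^m - 1) / 2^m" by (simp add: field_simps)
    ultimately have "2^m - 1 \<le> int k" using grid_le[OF ck, of "2^m - 1"] by simp
    moreover have "int (k + 1) < int (2^m)" using assms by (simp only: of_nat_less_iff)
    ultimately show False by simp
  qed
  define ji :: int where "ji = int k - 2^m + 3 * 2^(m-n)"
  have "vnk y = y - 1 + 3/2^n" using vnk_eq[OF n] .
  also have "\<dots> = real_of_int ji / 2^m" unfolding y_def ji_def using pow_div_shift[OF nm, of 3] by (simp add: field_simps)
  finally have v: "vnk y = real_of_int ji / 2^m" .
  have "0 < vnk y" "vnk y < 1" using vnk_01 y0 by auto
  then have "0 < real_of_int ji" "real_of_int ji < 2^m" unfolding v by (simp_all add: field_simps)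
  then have "1 \<le> ji" "real_of_int ji < real_of_int (2^m)" by simp_all
  then have "1 \<le> ji" "ji < 2^m" by (simp_all only: of_int_less_iff)
  then show ?thesis unfolding y_def[symmetric] v
    by (intro exI[of _ "nat ji"]) (auto simp: nat_less_iff)
qed

lemma vnk_last: assumes "1 - 1/2^m \<le> x" "x < 1" shows "0 < vnk x" "vnk x < 1/2^m"
proof -
  have "(1::real)/2^m \<le> 1" by simp
  then have x0: "0 \<le> x" using assms(1) by linarith
  obtain n where n: "vnk_piece n x" using piece_exists x0 assms by blast
  have "m < n"
  proof (rule ccontr)
    assume "\<not> m < n"
    then have "(1::real)/2^m \<le> 1/2^n" by (simp add: field_simps power_increasing)
    then show False using n assms unfolding vnk_piece_def by linarith
  qed
  then have "(2::real)/2^n \<le> 1/2^m" using pow2_le_div by simp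
  then show "0 < vnk x" "vnk x < 1/2^m" using vnk_range[OF n] vnk_01[OF x0 assms(2)] by linarith+
qed

lemma vnk_spec: "vnk (1 - 2/2^(Suc m)) = 1/2^(Suc m)"
proof -
  have "vnk_piece (Suc m) (1 - 2/2^(Suc m))" unfolding vnk_piece_def by (simp add: field_simps)
  from vnk_eq[OF this] show ?thesis by simp
qed

lemma vnk_inj: "inj_on vnk {0..<1}"
proof (rule inj_onI)
  fix x y assume x: "x \<in> {0..<(1::real)}" and y: "y \<in> {0..<(1::real)}" and e: "vnk x = vnk y"
  obtain n where n: "vnk_piece n x" using piece_exists x by auto
  obtain n' where n': "vnk_piece n' y" using piece_exists y by auto
  have "n = n'"
  proof (rule ccontr)
    assume "n \<noteq> n'"
    then consider "n < n'" | "n' < n" by linarith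
    then show False
    proof cases
      case 1 then show ?thesis using pow2_le_div[OF 1] vnk_range[OF n] vnk_range[OF n'] e by linarith
    next
      case 2 then show ?thesis using pow2_le_div[OF 2] vnk_range[OF n] vnk_range[OF n'] e by linarith
    qed
  qed
  then have n'': "vnk_piece n y" using n' by simp
  show "x = y" using vnk_eq[OF n] vnk_eq[OF n''] e by linarith
qed

lemma vnk_surj: assumes "0 < y" "y < 1" shows "\<exists>x. 0 \<le> x \<and> x < 1 \<and> vnk x = y"
proof -
  obtain n0 where n0: "(1/2::real)^n0 < y" using real_arch_pow_inv[of y "1/2"] assms by auto
  define P where "P n \<longleftrightarrow> 1/(2::real)^n \<le> y" for n
  have "P n0" using n0 unfolding P_def by (simp add: power_divide)
  define n where "n = (LEAST n. P n)"
  have Pn: "P n" unfolding n_def using \<open>P n0\<close> by (rule LeastI)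
  have n1: "n \<ge> 1" using Pn assms unfolding P_def by (cases n) auto
  have "\<not> P (n - 1)" unfolding n_def by (rule not_less_Least) (use n1 n_def in simp)
  then have "y < 1 / 2^(n-1)" unfolding P_def by simp
  moreover have "(1::real) / 2^(n-1) = 2 / 2^n" using n1 by (cases n) auto
  ultimately have yu: "y < 2/2^n" by simp
  have "(0::real) < 1/2^n" by simp
  define x where "x = y + 1 - 3/2^n"
  have p: "vnk_piece n x" unfolding vnk_piece_def x_def using n1 Pn yu unfolding P_def by auto
  have "x \<ge> 0" using p two_div_le1[OF n1] unfolding vnk_piece_def by linarith
  moreover have "x < 1" using p \<open>(0::real) < 1/2^n\<close> unfolding vnk_piece_def by linarith
  moreover have "vnk x = y" using vnk_eq[OF p] unfolding x_def by simp
  ultimately show ?thesis by blast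
qed




locale rot =
  fixes N q :: nat and \<pi> :: "nat \<Rightarrow> nat"
  assumes N1: "N \<ge> 1" and qN: "q = 2 ^ N" and perm: "\<pi> permutes {..<q}"
begin

abbreviation "F \<equiv> Frot q \<pi>"
abbreviation "R \<equiv> Rexch q \<pi>"

definition rho :: "nat \<Rightarrow> nat \<Rightarrow> nat" where
  "rho m k = \<pi> (k div 2^(m-N)) * 2^(m-N) + k mod 2^(m-N)"

definition special :: "nat \<Rightarrow> nat \<Rightarrow> bool" where
  "special m k \<longleftrightarrow> rho m k = 2^m - 1"

definition sigma :: "nat \<Rightarrow> nat \<Rightarrow> nat" where
  "sigma m k = cidx m (F (real k / 2^m))"

lemma pi_lt: "k < 2^N \<Longrightarrow> \<pi> k < 2^N"
  using permutes_in_image[OF perm] qN by auto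

lemma R_formula: assumes "0 \<le> x" "x < 1"
  shows "R x = x + (real (\<pi> (cidx N x)) - real (cidx N x)) / 2^N"
proof -
  have "real q = 2^N" using qN by simp
  then have "nat \<lfloor>real q * x\<rfloor> = cidx N x" unfolding cidx_def by simp
  then show ?thesis unfolding Rexch_def unitI_def using assms \<open>real q = 2^N\<close> by simp
qed

lemma R_cell: assumes "N \<le> m" "k < 2^m" "cell m k x"
  shows "R x = x + (real (rho m k) - real k) / 2^m" "rho m k < 2^m"
proof -
  define d :: nat where "d = 2^(m-N)"
  have d0: "d > 0" unfolding d_def by simp
  have md: "(2::nat)^m = 2^N * d" unfolding d_def using assms(1) by (metis le_add_diff_inverse power_add)
  have mdr: "(2::real)^m = 2^N * real d" using md by (metis of_nat_mult of_nat_numeral of_nat_power)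
  have x01: "0 \<le> x" "x < 1" using assms cell_nonneg cell_lt1 by auto
  define kN where "kN = k div d"
  have ck: "cidx N x = kN" unfolding kN_def d_def using cell_div[OF assms(3) assms(1)] cell_cidx by blast
  have kN: "kN < 2^N" unfolding kN_def using assms(2) md d0 by (simp add: div_less_iff_less_mult mult.commute)
  have pk: "\<pi> kN < 2^N" using pi_lt[OF kN] .
  have rk: "rho m k = \<pi> kN * d + k mod d" unfolding rho_def kN_def d_def by simp
  have kk: "real k = real kN * real d + real (k mod d)" unfolding kN_def
    by (metis div_mult_mod_eq of_nat_add of_nat_mult)
  have "R x = x + (real (\<pi> kN) - real kN) / 2^N" using R_formula[OF x01] ck by simp
  also have "\<dots> = x + (real (\<pi> kN) * real d - real kN * real d) / 2^m"
    unfolding mdr using d0 by (simp add: field_simps)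
  also have "\<dots> = x + (real (rho m k) - real k) / 2^m" unfolding rk kk by simp
  finally show "R x = x + (real (rho m k) - real k) / 2^m" .
  have "k mod d < d" using d0 by simp
  then have "\<pi> kN * d + k mod d < (\<pi> kN + 1) * d" by simp
  also have "\<dots> \<le> 2^N * d" using pk by (intro mult_right_mono) auto
  finally show "rho m k < 2^m" unfolding rk md .
qed

lemma R_cellN: assumes "0 \<le> x" "x < 1" shows "cell N (\<pi> (cidx N x)) (R x)" "\<pi> (cidx N x) < 2^N"
proof -
  have c: "cell N (cidx N x) x" using cidx_cell assms by blast
  have "R x = x + real_of_int (int (\<pi> (cidx N x)) - int (cidx N x)) / 2^N" using R_formula[OF assms] by simp
  moreover have "nat (int (cidx N x) + (int (\<pi> (cidx N x)) - int (cidx N x))) = \<pi> (cidx N x)" by simp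
  ultimately show "cell N (\<pi> (cidx N x)) (R x)"
    using cell_shift[OF c, of "int (\<pi> (cidx N x)) - int (cidx N x)"] by simp
  show "\<pi> (cidx N x) < 2^N" using pi_lt cidx_lt assms by blast
qed

lemma R_01: assumes "0 \<le> x" "x < 1" shows "0 \<le> R x" "R x < 1"
  using R_cellN[OF assms] cell_nonneg cell_lt1 by blast+

lemma R_inj: "inj_on R {0..<1}"
proof (rule inj_onI)
  fix x y assume x: "x \<in> {0..<(1::real)}" and y: "y \<in> {0..<(1::real)}" and e: "R x = R y"
  have "cidx N (R x) = \<pi> (cidx N x)" "cidx N (R y) = \<pi> (cidx N y)"
    using R_cellN x y cell_cidx by auto
  then have "\<pi> (cidx N x) = \<pi> (cidx N y)" using e by simp
  then have "cidx N x = cidx N y" using permutes_inj[OF perm] by (meson injD)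
  then show "x = y" using R_formula x y e by auto
qed

lemma R_surj: assumes "0 \<le> y" "y < 1" shows "\<exists>x. 0 \<le> x \<and> x < 1 \<and> R x = y"
proof -
  define k' where "k' = cidx N y"
  have k'q: "k' < q" unfolding k'_def qN using cidx_lt assms by blast
  then obtain k where k: "k < q" "\<pi> k = k'" using permutes_image[OF perm] by (metis imageE lessThan_iff)
  have cy: "cell N k' y" unfolding k'_def using cidx_cell assms by blast
  define x where "x = y + real_of_int (int k - int k') / 2^N"
  have cx: "cell N k x" unfolding x_def using cell_shift[OF cy, of "int k - int k'"] by simp
  have x01: "0 \<le> x" "x < 1" using cx cell_nonneg cell_lt1 k qN by auto
  have "R x = x + (real (\<pi> k) - real k) / 2^N" using R_formula[OF x01] cell_cidx[OF cx] by simp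
  also have "\<dots> = y" unfolding x_def k by (simp add: field_simps)
  finally show ?thesis using x01 by blast
qed

lemma F_eq: "F x = vnk (R x)" unfolding Frot_def by simp

lemma F_01: assumes "0 \<le> x" "x < 1" shows "0 < F x" "F x < 1"
  using vnk_01 R_01[OF assms] F_eq by auto

lemma F_inj: "inj_on F {0..<1}"
proof -
  have "R ` {0..<1} \<subseteq> {0..<1}" using R_01 by auto
  then show ?thesis unfolding Frot_def using R_inj vnk_inj by (metis comp_inj_on inj_on_subset)
qed

lemma F_surj: assumes "0 < y" "y < 1" shows "\<exists>x. 0 \<le> x \<and> x < 1 \<and> F x = y"
proof -
  obtain z where z: "0 \<le> z" "z < 1" "vnk z = y" using vnk_surj assms by blast
  obtain x where "0 \<le> x" "x < 1" "R x = z" using R_surj z by blast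
  then show ?thesis using z F_eq by metis
qed

end



context rot begin

lemma sigma_nonspec: assumes "N \<le> m" "k < 2^m" "\<not> special m k"
  shows "F (real k / 2^m) = real (sigma m k) / 2^m" "1 \<le> sigma m k" "sigma m k < 2^m"
    "\<And>x. cell m k x \<Longrightarrow> F x = x + (real (sigma m k) - real k) / 2^m"
proof -
  define r where "r = rho m k"
  have r: "r < 2^m" "r \<noteq> 2^m - 1" using R_cell(2)[OF assms(1,2) cell_left] assms(3) unfolding r_def special_def by auto
  then have r1: "r + 1 < 2^m" by linarith
  obtain j where j: "vnk (real r/2^m) = real j/2^m" "1 \<le> j" "j < 2^m" using vnk_grid[OF r1] by blast
  have Rx: "R x = x + (real r - real k) / 2^m" if "cell m k x" for x
    using R_cell(1)[OF assms(1,2) that] unfolding r_def .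
  have Rcell: "cell m r (R x)" if "cell m k x" for x
  proof -
    have "R x = x + real_of_int (int r - int k) / 2^m" using Rx[OF that] by simp
    then show ?thesis using cell_shift[OF that, of "int r - int k"] by simp
  qed
  have Fx: "F x = x + (real j - real k) / 2^m" if "cell m k x" for x
  proof -
    have "F x = vnk (R x)" by (rule F_eq)
    also have "\<dots> = R x + (vnk (real r/2^m) - real r/2^m)" using vnk_cell[OF r1 Rcell[OF that]] .
    also have "\<dots> = x + (real j - real k) / 2^m" unfolding Rx[OF that] j(1) by (simp add: field_simps)
    finally show ?thesis .
  qed
  have Fk: "F (real k / 2^m) = real j / 2^m" using Fx[OF cell_left] by (simp add: field_simps)
  have sj: "sigma m k = j" unfolding sigma_def Fk using cell_cidx[OF cell_left] .
  show "F (real k / 2^m) = real (sigma m k) / 2^m" using Fk sj by simp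
  show "1 \<le> sigma m k" "sigma m k < 2^m" using j sj by auto
  show "\<And>x. cell m k x \<Longrightarrow> F x = x + (real (sigma m k) - real k) / 2^m" using Fx sj by simp
qed

lemma F_spec: assumes "N \<le> m" "k < 2^m" "special m k" "cell m k x"
  shows "0 < F x" "F x < 1/2^m"
proof -
  have r: "rho m k = 2^m - 1" using assms(3) unfolding special_def .
  have "(1::nat) \<le> 2^m" by simp
  then have rr: "real (rho m k) = 2^m - 1" unfolding r by (simp add: of_nat_diff)
  have Rx: "R x = x + (real (rho m k) - real k) / 2^m" using R_cell(1)[OF assms(1,2,4)] .
  have "real k / 2^m \<le> x" "x < (real k + 1)/2^m" using assms(4) unfolding cell_def by auto
  then have "1 - 1/2^m \<le> R x" "R x < 1" unfolding Rx rr by (simp_all add: field_simps)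
  then show "0 < F x" "F x < 1/2^m" using vnk_last F_eq by auto
qed

lemma sigma_spec: assumes "N \<le> m" "k < 2^m" "special m k" shows "sigma m k = 0"
proof -
  have "0 < F (real k / 2^m)" "F (real k / 2^m) < 1/2^m" using F_spec[OF assms cell_left] by auto
  then have "cell m 0 (F (real k / 2^m))" unfolding cell_def by simp
  then show ?thesis unfolding sigma_def by (rule cell_cidx)
qed

lemma cidx_F: assumes "N \<le> m" "0 \<le> x" "x < 1" shows "cidx m (F x) = sigma m (cidx m x)"
proof -
  define k where "k = cidx m x"
  have c: "cell m k x" unfolding k_def using cidx_cell assms by blast
  have k: "k < 2^m" unfolding k_def using cidx_lt assms by blast
  show ?thesis
  proof (cases "special m k")
    case True
    have "0 < F x" "F x < 1/2^m" using F_spec[OF assms(1) k True c] by auto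
    then have "cell m 0 (F x)" unfolding cell_def by simp
    then show ?thesis using sigma_spec[OF assms(1) k True] cell_cidx unfolding k_def by auto
  next
    case False
    have "F x = x + real_of_int (int (sigma m k) - int k) / 2^m" using sigma_nonspec(4)[OF assms(1) k False c] by simp
    then have "cell m (sigma m k) (F x)" using cell_shift[OF c, of "int (sigma m k) - int k"] by simp
    then show ?thesis using cell_cidx unfolding k_def by auto
  qed
qed

lemma sigma_lt: assumes "N \<le> m" "k < 2^m" shows "sigma m k < 2^m"
  using sigma_nonspec(3)[OF assms] sigma_spec[OF assms] by (cases "special m k") auto

lemma sigma_Suc_nonspec: assumes "N \<le> m" "k < 2^m" "\<not> special m k" "b < 2"
  shows "sigma (Suc m) (2*k+b) = 2 * sigma m k + b"
proof -
  define x where "x = real (2*k+b) / 2^(Suc m)"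
  have c1: "cell (Suc m) (2*k+b) x" unfolding x_def by (rule cell_left)
  have "cell m ((2*k+b) div 2^(Suc m - m)) x" using cell_div[OF c1, of m] by simp
  moreover have "(2*k+b) div 2^(Suc m - m) = k" using assms(4) by simp
  ultimately have c: "cell m k x" by simp
  have "F x = x + (real (sigma m k) - real k) / 2^m" using sigma_nonspec(4)[OF assms(1-3) c] .
  also have "\<dots> = real (2 * sigma m k + b) / 2^(Suc m)" unfolding x_def by (simp add: field_simps)
  finally have Fx: "F x = real (2 * sigma m k + b) / 2^(Suc m)" .
  have "sigma (Suc m) (2*k+b) = cidx (Suc m) (F x)" unfolding sigma_def x_def ..
  also have "\<dots> = cidx (Suc m) (real (2 * sigma m k + b) / 2^(Suc m))" using Fx by simp
  also have "\<dots> = 2 * sigma m k + b" by (rule cell_cidx[OF cell_left])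
  finally show ?thesis .
qed

lemma sigma_Suc_spec: assumes "N \<le> m" "k < 2^m" "special m k"
  shows "sigma (Suc m) (2*k) = 1"
proof -
  have e: "real (2*k) / 2^(Suc m) = real k / 2^m" by simp
  have "(1::nat) \<le> 2^m" by simp
  then have rr: "real (rho m k) = 2^m - 1" using assms(3) unfolding special_def by (simp add: of_nat_diff)
  have "R (real k / 2^m) = real (rho m k) / 2^m" using R_cell(1)[OF assms(1,2) cell_left] by (simp add: field_simps)
  also have "\<dots> = 1 - 2/2^(Suc m)" unfolding rr by (simp add: field_simps)
  finally have "F (real (2*k) / 2^(Suc m)) = 1/2^(Suc m)" unfolding e F_eq using vnk_spec by simp
  then have "F (real (2*k) / 2^(Suc m)) = real (1::nat)/2^(Suc m)" by simp
  then show ?thesis unfolding sigma_def using cell_cidx[OF cell_left] by metis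
qed

lemma sigma_inj: assumes "N \<le> m" shows "inj_on (sigma m) {..<2^m}"
proof (rule inj_onI)
  fix k1 k2 assume k1: "k1 \<in> {..<2^m}" and k2: "k2 \<in> {..<2^m}" and e: "sigma m k1 = sigma m k2"
  have k: "k1 < 2^m" "k2 < 2^m" using k1 k2 by auto
  have in01: "real k / 2^m \<in> {0..<1}" if "k < 2^m" for k
    using cell_left[of m k] cell_nonneg cell_lt1 that by auto
  consider "special m k1" "special m k2" | "special m k1" "\<not> special m k2" | "\<not> special m k1" "special m k2"
    | "\<not> special m k1" "\<not> special m k2" by blast
  then show "k1 = k2"
  proof cases
    case 1
    then have "rho m k1 = rho m k2" unfolding special_def by simp
    moreover have "R (real k1 / 2^m) = real (rho m k1) / 2^m" using R_cell(1)[OF assms k(1) cell_left] by (simp add: field_simps)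
    moreover have "R (real k2 / 2^m) = real (rho m k2) / 2^m" using R_cell(1)[OF assms k(2) cell_left] by (simp add: field_simps)
    ultimately have "R (real k1 / 2^m) = R (real k2 / 2^m)" by simp
    then have "real k1 / 2^m = real k2 / 2^m" using R_inj in01 k by (meson inj_onD)
    then show ?thesis by simp
  next
    case 2 then show ?thesis using sigma_spec[OF assms k(1)] sigma_nonspec(2)[OF assms k(2)] e by simp
  next
    case 3 then show ?thesis using sigma_spec[OF assms k(2)] sigma_nonspec(2)[OF assms k(1)] e by simp
  next
    case 4
    then have "F (real k1 / 2^m) = F (real k2 / 2^m)" using sigma_nonspec(1)[OF assms k(1)] sigma_nonspec(1)[OF assms k(2)] e by simp
    then have "real k1 / 2^m = real k2 / 2^m" using F_inj in01 k by (meson inj_onD)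
    then show ?thesis by simp
  qed
qed

end



lemma funpow_in: "(\<forall>k<n. s k < (n::nat)) \<Longrightarrow> k < n \<Longrightarrow> (s^^t) k < n"
  by (induction t) auto

lemma funpow_inj: assumes "inj_on s {..<n}" "\<forall>k<n. s k < (n::nat)" shows "inj_on (s^^t) {..<n}"
proof (induction t)
  case 0 then show ?case by simp
next
  case (Suc t)
  have im: "(s^^t) ` {..<n} \<subseteq> {..<n}" using funpow_in[OF assms(2)] by auto
  have "inj_on (s \<circ> (s^^t)) {..<n}" using comp_inj_on[OF Suc.IH inj_on_subset[OF assms(1) im]] .
  then show ?case by (simp add: comp_def)
qed

lemma funpow_period: "(s^^M) k = k \<Longrightarrow> (s^^(M*a + b)) k = (s^^b) k"
proof (induction a)
  case 0 then show ?case by simp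
next
  case (Suc a)
  have e: "M * Suc a + b = (M*a+b) + M" by simp
  have "(s^^(M * Suc a + b)) k = (s^^((M*a+b) + M)) k" by (simp only: e)
  also have "\<dots> = (s^^(M*a+b)) ((s^^M) k)" by (simp only: funpow_add comp_apply)
  finally have "(s^^(M * Suc a + b)) k = (s^^(M*a+b)) ((s^^M) k)" .
  then show ?case using Suc by simp
qed

lemma funpow_return: assumes "inj_on s {..<n}" "\<forall>k<n. s k < (n::nat)" "k < n"
  shows "\<exists>M>0. (s^^M) k = k"
proof -
  have "\<not> inj_on (\<lambda>t. (s^^t) k) {..n}"
  proof
    assume "inj_on (\<lambda>t. (s^^t) k) {..n}"
    moreover have "(\<lambda>t. (s^^t) k) ` {..n} \<subseteq> {..<n}" using funpow_in[OF assms(2,3)] by auto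
    ultimately have "card {..n} \<le> card {..<n}" by (intro card_inj_on_le) auto
    then show False by simp
  qed
  then obtain a b where ab: "a \<le> n" "b \<le> n" "a \<noteq> b" "(s^^a) k = (s^^b) k" unfolding inj_on_def by auto
  have "\<exists>a b. a < b \<and> (s^^a) k = (s^^b) k" using ab by (metis linorder_neqE_nat)
  then obtain a b where ab: "a < b" "(s^^a) k = (s^^b) k" by blast
  have "(s^^a) ((s^^(b-a)) k) = (s^^b) k" using ab(1) by (metis funpow_add le_add_diff_inverse less_imp_le comp_apply)
  then have "(s^^a) ((s^^(b-a)) k) = (s^^a) k" using ab by simp
  moreover have "(s^^(b-a)) k < n" using funpow_in[OF assms(2,3)] .
  ultimately have "(s^^(b-a)) k = k" using funpow_inj[OF assms(1,2), of a] assms(3) by (meson inj_onD lessThan_iff)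
  then show ?thesis using ab(1) by (intro exI[of _ "b-a"]) auto
qed

context rot begin

definition orb :: "nat \<Rightarrow> nat set" where
  "orb m = range (\<lambda>t. (sigma m ^^ t) 0)"

lemma sig_maps: "N \<le> m \<Longrightarrow> \<forall>k<2^m. sigma m k < 2^m"
  using sigma_lt by blast

lemma F_iter: assumes "N \<le> m" "0 \<le> x" "x < 1"
  shows "cidx m ((F^^t) x) = (sigma m ^^ t) (cidx m x) \<and> 0 \<le> (F^^t) x \<and> (F^^t) x < 1"
proof (induction t)
  case 0 then show ?case using assms by simp
next
  case (Suc t)
  then show ?case using cidx_F[OF assms(1)] F_01 by (auto intro: less_imp_le)
qed

lemma F_iter01: assumes "0 \<le> x" "x < 1" shows "0 \<le> (F^^t) x" "(F^^t) x < 1"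
  using F_iter[of N x t] assms by auto

lemma double: assumes "N \<le> m" "k \<in> orb m"
  shows "2*k \<in> orb (Suc m)" "2*k+1 \<in> orb (Suc m)"
proof -
  define s where "s = sigma m"
  define s' where "s' = sigma (Suc m)"
  have smaps: "\<forall>k<2^m. s k < 2^m" unfolding s_def using sig_maps[OF assms(1)] .
  obtain M where M: "M > 0" "(s^^M) 0 = 0"
    using funpow_return[OF sigma_inj[OF assms(1)] sig_maps[OF assms(1)], of 0] unfolding s_def by auto
  define L where "L = (LEAST n. n > 0 \<and> (s^^n) 0 = 0)"
  have L: "L > 0" "(s^^L) 0 = 0" unfolding L_def using LeastI[of "\<lambda>n. n > 0 \<and> (s^^n) 0 = 0" M] M by auto
  have Lmin: "(s^^j) 0 \<noteq> 0" if "0 < j" "j < L" for j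
    using not_less_Least[of j "\<lambda>n. n > 0 \<and> (s^^n) 0 = 0"] that unfolding L_def by auto
  have lt: "(s^^j) 0 < 2^m" for j using funpow_in[OF smaps] by simp
  have ns: "\<not> special m ((s^^j) 0)" if "Suc j < L" for j
  proof
    assume sp: "special m ((s^^j) 0)"
    have "(s^^(Suc j)) 0 = s ((s^^j) 0)" by simp
    also have "\<dots> = 0" unfolding s_def using sigma_spec[OF assms(1) _ sp] lt unfolding s_def by simp
    finally show False using Lmin[of "Suc j"] that by simp
  qed
  have A: "(s'^^j) 0 = 2 * (s^^j) 0 + b" if "j < L" "b < 2" "(s'^^0) 0 = 2 * (s^^0) 0 + b" for j b
    using that
  proof (induction j)
    case 0 then show ?case by simp
  next
    case (Suc j)
    then have "(s'^^j) 0 = 2 * (s^^j) 0 + b" by simp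
    then have "(s'^^(Suc j)) 0 = s' (2 * (s^^j) 0 + b)" by simp
    also have "\<dots> = 2 * s ((s^^j) 0) + b" unfolding s'_def s_def
      using sigma_Suc_nonspec[OF assms(1) _ _ Suc.prems(2)] lt ns[of j] Suc.prems(1) unfolding s_def by simp
    finally show ?case by simp
  qed
  have A0: "(s'^^j) 0 = 2 * (s^^j) 0" if "j < L" for j using A[of j 0] that by simp
  have lastsp: "special m ((s^^(L-1)) 0)"
  proof (rule ccontr)
    assume "\<not> special m ((s^^(L-1)) 0)"
    then have "1 \<le> s ((s^^(L-1)) 0)" unfolding s_def using sigma_nonspec(2)[OF assms(1)] lt unfolding s_def by blast
    moreover have "s ((s^^(L-1)) 0) = (s^^L) 0" using L(1) by (metis Suc_diff_1 comp_apply funpow.simps(2))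
    ultimately show False using L by simp
  qed
  have sL: "(s'^^L) 0 = 1"
  proof -
    have "(s'^^L) 0 = s' ((s'^^(L-1)) 0)" using L(1) by (metis Suc_diff_1 comp_apply funpow.simps(2))
    also have "\<dots> = s' (2 * (s^^(L-1)) 0)" using A0[of "L-1"] L(1) by simp
    also have "\<dots> = 1" unfolding s'_def using sigma_Suc_spec[OF assms(1) lt[unfolded s_def] lastsp[unfolded s_def]]
      unfolding s_def by simp
    finally show ?thesis .
  qed
  have B: "(s'^^(L+j)) 0 = 2 * (s^^j) 0 + 1" if "j < L" for j
    using that
  proof (induction j)
    case 0 show ?case using sL by simp
  next
    case (Suc j)
    then have "(s'^^(L+j)) 0 = 2 * (s^^j) 0 + 1" by simp
    then have "(s'^^(L + Suc j)) 0 = s' (2 * (s^^j) 0 + 1)" by simp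
    also have "\<dots> = 2 * s ((s^^j) 0) + 1" unfolding s'_def s_def
      using sigma_Suc_nonspec[OF assms(1) _ _, of _ 1] lt ns[of j] Suc.prems(1) unfolding s_def by simp
    finally show ?case by simp
  qed
  obtain t where t: "k = (s^^t) 0" using assms(2) unfolding orb_def s_def by auto
  have "(s^^t) 0 = (s^^(L * (t div L) + t mod L)) 0" by simp
  also have "\<dots> = (s^^(t mod L)) 0" using funpow_period[OF L(2)] .
  finally have k: "k = (s^^(t mod L)) 0" using t by simp
  have tm: "t mod L < L" using L(1) by simp
  show "2*k \<in> orb (Suc m)" unfolding orb_def using A0[OF tm] k unfolding s'_def by (metis rangeI)
  show "2*k+1 \<in> orb (Suc m)" unfolding orb_def using B[OF tm] k unfolding s'_def by (metis rangeI)
qed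

end



context rot begin

lemma coverage: assumes "N \<le> m" shows "\<forall>k. k < 2^m \<longrightarrow> k div 2^(m-N) \<in> orb N \<longrightarrow> k \<in> orb m"
  using assms
proof (induction m rule: nat_induct_at_least)
  case base then show ?case by simp
next
  case (Suc m)
  show ?case
  proof (intro allI impI)
    fix k assume k: "k < 2^Suc m" "k div 2^(Suc m - N) \<in> orb N"
    have e: "Suc m - N = Suc (m - N)" using Suc.hyps by simp
    have "k div 2 div 2^(m-N) = k div 2^(Suc m - N)" unfolding e by (simp add: div_mult2_eq)
    moreover have "k div 2 < 2^m" using k(1) by simp
    ultimately have "k div 2 \<in> orb m" using Suc.IH k(2) by simp
    then have "2 * (k div 2) \<in> orb (Suc m)" "2 * (k div 2) + 1 \<in> orb (Suc m)" using double[OF Suc.hyps] by auto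
    moreover have "k = 2 * (k div 2) \<or> k = 2 * (k div 2) + 1" by presburger
    ultimately show "k \<in> orb (Suc m)" by auto
  qed
qed

lemma cidx_div: assumes "N \<le> m" "0 \<le> x" "x < 1" shows "cidx m x div 2^(m-N) = cidx N x"
  using cell_div[OF cidx_cell[OF assms(2)] assms(1)] cell_cidx by metis

lemma in_orb_cidx: assumes "N \<le> m" "0 \<le> x" "x < 1" "cidx N x \<in> orb N" shows "cidx m x \<in> orb m"
  using coverage[OF assms(1)] cidx_div[OF assms(1-3)] cidx_lt[OF assms(2,3)] assms(4) by auto

lemma nonper: assumes "0 \<le> x" "x < 1" "cidx N x \<in> orb N" "n > 0" shows "(F^^n) x \<noteq> x"
proof
  assume fx: "(F^^n) x = x"
  define m where "m = N + n"
  have Nm: "N \<le> m" unfolding m_def by simp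
  define s where "s = sigma m"
  have smaps: "\<forall>k<2^m. s k < 2^m" unfolding s_def using sig_maps[OF Nm] .
  have sinj: "inj_on s {..<2^m}" unfolding s_def using sigma_inj[OF Nm] .
  define k where "k = cidx m x"
  have ko: "k \<in> orb m" unfolding k_def using in_orb_cidx[OF Nm assms(1-3)] .
  have klt: "k < 2^m" unfolding k_def using cidx_lt assms by blast
  have "(s^^n) k = k" unfolding s_def k_def using F_iter[OF Nm assms(1,2), of n] fx by simp
  obtain i where i: "k = (s^^i) 0" using ko unfolding orb_def s_def by auto
  have "(s^^i) ((s^^n) 0) = (s^^n) ((s^^i) 0)" by (metis funpow_add add.commute comp_apply)
  also have "\<dots> = (s^^i) 0" using \<open>(s^^n) k = k\<close> i by simp
  finally have "(s^^i) ((s^^n) 0) = (s^^i) 0" .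
  moreover have "(s^^n) 0 < 2^m" using funpow_in[OF smaps] by simp
  ultimately have sn: "(s^^n) 0 = 0" using funpow_inj[OF sinj smaps, of i] by (meson inj_onD lessThan_iff zero_less_numeral zero_less_power)
  have sub: "orb m \<subseteq> (\<lambda>t. (s^^t) 0) ` {..<n}"
  proof
    fix k' assume "k' \<in> orb m"
    then obtain t where t: "k' = (s^^t) 0" unfolding orb_def s_def by auto
    have "(s^^t) 0 = (s^^(n * (t div n) + t mod n)) 0" by simp
    also have "\<dots> = (s^^(t mod n)) 0" using funpow_period[OF sn] .
    finally show "k' \<in> (\<lambda>t. (s^^t) 0) ` {..<n}" using t assms(4) by auto
  qed
  have "{..<2^n} \<subseteq> orb m"
  proof
    fix k' :: nat assume "k' \<in> {..<2^n}"
    then have "k' < 2^n" by simp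
    moreover have "2^n \<le> (2::nat)^m" unfolding m_def by (intro power_increasing) auto
    ultimately have "k' < 2^m" by linarith
    moreover have "k' div 2^(m-N) = 0" using \<open>k' < 2^n\<close> unfolding m_def by simp
    moreover have "0 \<in> orb N" unfolding orb_def by (metis funpow_0 rangeI)
    ultimately show "k' \<in> orb m" using coverage[OF Nm] by auto
  qed
  then have "card {..<(2::nat)^n} \<le> card ((\<lambda>t. (s^^t) 0) ` {..<n})" using sub by (intro card_mono) auto
  also have "\<dots> \<le> card {..<n}" by (rule card_image_le) simp
  finally have "2^n \<le> n" by simp
  moreover have "n < 2^n" by (rule less_exp)
  ultimately show False by simp
qed

lemma dense: assumes "0 \<le> x" "x < 1" "cidx N x \<in> orb N" "0 \<le> y" "y < 1" "cidx N y \<in> orb N" "e > 0"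
  shows "\<exists>t. dist ((F^^t) x) y < e"
proof -
  obtain m0 where m0: "(1/2::real)^m0 < e" using real_arch_pow_inv[of e "1/2"] assms(7) by auto
  define m where "m = m0 + N"
  have Nm: "N \<le> m" unfolding m_def by simp
  have "(1::real)/2^m \<le> 1/2^m0" unfolding m_def by (simp add: field_simps power_increasing)
  then have me: "1/2^m < e" using m0 by (simp add: power_divide)
  define s where "s = sigma m"
  have smaps: "\<forall>k<2^m. s k < 2^m" unfolding s_def using sig_maps[OF Nm] .
  obtain M where M: "M > 0" "(s^^M) 0 = 0"
    using funpow_return[OF sigma_inj[OF Nm] sig_maps[OF Nm], of 0] unfolding s_def by auto
  obtain i where i: "cidx m x = (s^^i) 0" using in_orb_cidx[OF Nm assms(1-3)] unfolding orb_def s_def by auto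
  obtain j where j: "cidx m y = (s^^j) 0" using in_orb_cidx[OF Nm assms(4-6)] unfolding orb_def s_def by auto
  define t where "t = j + M * i - i"
  have Mi: "i \<le> M * i" using M(1) by simp
  have "cidx m ((F^^t) x) = (s^^t) ((s^^i) 0)" using F_iter[OF Nm assms(1,2), of t] i unfolding s_def by simp
  also have "\<dots> = (s^^(t + i)) 0" by (simp add: funpow_add)
  also have "t + i = M * i + j" unfolding t_def using Mi by arith
  also have "(s^^(M * i + j)) 0 = (s^^j) 0" using funpow_period[OF M(2)] .
  finally have ce: "cidx m ((F^^t) x) = cidx m y" using j by simp
  have c1: "cell m (cidx m y) ((F^^t) x)" using ce cidx_cell F_iter01 assms(1,2) by metis
  have c2: "cell m (cidx m y) y" using cidx_cell assms(4) by blast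
  have "\<bar>(F^^t) x - y\<bar> < 1/2^m" using c1 c2 unfolding cell_def by (simp add: abs_less_iff field_simps)
  then show ?thesis using me by (intro exI[of _ t]) (simp add: dist_real_def)
qed

lemma orb_closed: assumes "k < 2^N" "k \<notin> orb N" shows "(sigma N ^^ j) k \<notin> orb N"
proof
  assume "(sigma N ^^ j) k \<in> orb N"
  then obtain t where t: "(sigma N ^^ j) k = (sigma N ^^ t) 0" unfolding orb_def by auto
  obtain M where M: "M > 0" "(sigma N ^^ M) k = k"
    using funpow_return[OF sigma_inj sig_maps, of N k] assms(1) by auto
  have "1 * (j+1) \<le> M * (j+1)" using M(1) by (intro mult_le_mono1) simp
  then have jl: "j \<le> M * (j+1)" by simp
  have "k = (sigma N ^^ (M * (j+1) + 0)) k" using funpow_period[OF M(2), of "j+1" 0] by simp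
  also have "M * (j+1) + 0 = (M * (j+1) - j) + j" using jl by simp
  also have "(sigma N ^^ ((M * (j+1) - j) + j)) k = (sigma N ^^ (M * (j+1) - j)) ((sigma N ^^ t) 0)"
    using t by (simp add: funpow_add)
  also have "\<dots> = (sigma N ^^ ((M * (j+1) - j) + t)) 0" by (simp add: funpow_add)
  finally have "k \<in> orb N" unfolding orb_def by (metis rangeI)
  then show False using assms by simp
qed

lemma per_transl: assumes "k < 2^N" "k \<notin> orb N" "cell N k x"
  shows "(F^^j) x = x + (real ((sigma N ^^ j) k) - real k) / 2^N"
proof (induction j)
  case 0 then show ?case by simp
next
  case (Suc j)
  define kj where "kj = (sigma N ^^ j) k"
  have kjlt: "kj < 2^N" unfolding kj_def using funpow_in[OF sig_maps[of N]] assms(1) by simp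
  have ns: "\<not> special N kj"
  proof
    assume "special N kj"
    then have "sigma N kj = 0" using sigma_spec kjlt by simp
    then have "(sigma N ^^ Suc j) k = (sigma N ^^ 0) 0" unfolding kj_def by simp
    then show False using orb_closed[OF assms(1,2), of "Suc j"] unfolding orb_def by (metis rangeI)
  qed
  have "(F^^j) x = x + real_of_int (int kj - int k) / 2^N" using Suc unfolding kj_def by simp
  then have c: "cell N kj ((F^^j) x)" using cell_shift[OF assms(3), of "int kj - int k"] by simp
  have "(F^^Suc j) x = F ((F^^j) x)" by simp
  also have "\<dots> = (F^^j) x + (real (sigma N kj) - real kj) / 2^N" using sigma_nonspec(4)[OF _ kjlt ns c] by simp
  also have "\<dots> = x + (real ((sigma N ^^ Suc j) k) - real k) / 2^N" using Suc unfolding kj_def by (simp add: field_simps)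
  finally show ?case .
qed

lemma per_iff: assumes "k < 2^N" "k \<notin> orb N" "cell N k x"
  shows "(F^^n) x = x \<longleftrightarrow> (sigma N ^^ n) k = k"
proof -
  have e: "(F^^n) x - x = (real ((sigma N ^^ n) k) - real k) / 2^N" using per_transl[OF assms, of n] by simp
  show ?thesis
  proof
    assume "(F^^n) x = x"
    then have "(real ((sigma N ^^ n) k) - real k) / 2^N = 0" using e by simp
    then have "real ((sigma N ^^ n) k) = real k" by simp
    then show "(sigma N ^^ n) k = k" by simp
  next
    assume "(sigma N ^^ n) k = k"
    then show "(F^^n) x = x" using e by simp
  qed
qed

end



context rot begin

definition perk :: "nat \<Rightarrow> nat" where
  "perk k = (LEAST n. n > 0 \<and> (sigma N ^^ n) k = k)"

lemma Iper_char: "Iper F = {x. 0 \<le> x \<and> x < 1 \<and> cidx N x \<notin> orb N}"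
proof (intro set_eqI iffI)
  fix x assume "x \<in> Iper F"
  then have x: "0 \<le> x" "x < 1" "\<exists>n>0. (F^^n) x = x" unfolding Iper_def unitI_def periodic_pt_def by auto
  then show "x \<in> {x. 0 \<le> x \<and> x < 1 \<and> cidx N x \<notin> orb N}" using nonper by auto
next
  fix x assume "x \<in> {x. 0 \<le> x \<and> x < 1 \<and> cidx N x \<notin> orb N}"
  then have x: "0 \<le> x" "x < 1" "cidx N x \<notin> orb N" by auto
  have k: "cidx N x < 2^N" using cidx_lt x by blast
  obtain M where M: "M > 0" "(sigma N ^^ M) (cidx N x) = cidx N x"
    using funpow_return[OF sigma_inj sig_maps, of N "cidx N x"] k by auto
  have "(F^^M) x = x" using per_iff[OF k x(3) cidx_cell[OF x(1)]] M by simp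
  then show "x \<in> Iper F" unfolding Iper_def unitI_def periodic_pt_def using x M by auto
qed

lemma Inp_char: "Inp F = {x. 0 \<le> x \<and> x < 1 \<and> cidx N x \<in> orb N}"
  unfolding Inp_def Iper_char unitI_def by auto

lemma minper: assumes "x \<in> Iper F" shows "min_period F x = perk (cidx N x)"
proof -
  have x: "0 \<le> x" "x < 1" "cidx N x \<notin> orb N" using assms Iper_char by auto
  have k: "cidx N x < 2^N" using cidx_lt x by blast
  show ?thesis unfolding min_period_def perk_def using per_iff[OF k x(3) cidx_cell[OF x(1)]] by simp
qed

lemma Iper_sub: "Iper F \<subseteq> {0..<1}" unfolding Iper_def unitI_def by auto

lemma F_Iper: assumes "x \<in> Iper F" shows "F x \<in> Iper F"
proof -
  have x: "0 \<le> x" "x < 1" "\<exists>n>0. (F^^n) x = x" using assms unfolding Iper_def unitI_def periodic_pt_def by auto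
  then obtain n where n: "n > 0" "(F^^n) x = x" by auto
  have "(F^^n) (F x) = F x" using n by (metis funpow_swap1)
  then show ?thesis using F_01[OF x(1,2)] n unfolding Iper_def unitI_def periodic_pt_def by auto
qed

lemma bij_Iper: "bij_betw F (Iper F) (Iper F)"
proof -
  have inj: "inj_on F (Iper F)" using F_inj Iper_sub by (rule inj_on_subset)
  have "Iper F \<subseteq> F ` Iper F"
  proof
    fix y assume y: "y \<in> Iper F"
    then have y01: "0 \<le> y" "y < 1" and "\<exists>n>0. (F^^n) y = y" unfolding Iper_def unitI_def periodic_pt_def by auto
    then obtain n where n: "n > 0" "(F^^n) y = y" by auto
    define x where "x = (F^^(n-1)) y"
    have Fx: "F x = y" unfolding x_def using n by (metis Suc_diff_1 funpow_simps_right(2) comp_apply funpow_swap1 funpow.simps(2))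
    have "(F^^n) x = (F^^(n-1)) ((F^^n) y)" unfolding x_def by (metis funpow_swap1 Suc_diff_1 n(1) funpow_add add.commute comp_apply)
    then have "(F^^n) x = x" using n unfolding x_def by simp
    moreover have "0 \<le> x" "x < 1" unfolding x_def using F_iter01 y01 by auto
    ultimately have "x \<in> Iper F" using n unfolding Iper_def unitI_def periodic_pt_def by auto
    then show "y \<in> F ` Iper F" using Fx by blast
  qed
  moreover have "F ` Iper F \<subseteq> Iper F" using F_Iper by auto
  ultimately show ?thesis using inj unfolding bij_betw_def by auto
qed

lemma F_Inp: assumes "x \<in> Inp F" shows "F x \<in> Inp F"
proof -
  have x: "0 \<le> x" "x < 1" "x \<notin> Iper F" using assms unfolding Inp_def unitI_def by auto
  have Fx: "0 \<le> F x" "F x < 1" using F_01[OF x(1,2)] by auto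
  have "F x \<notin> Iper F"
  proof
    assume "F x \<in> Iper F"
    then obtain n where n: "n > 0" "(F^^n) (F x) = F x" unfolding Iper_def periodic_pt_def by auto
    then have "F ((F^^n) x) = F x" by (metis funpow_swap1)
    moreover have "(F^^n) x \<in> {0..<1}" "x \<in> {0..<1}" using F_iter01 x by auto
    ultimately have "(F^^n) x = x" using F_inj by (meson inj_onD)
    then have "x \<in> Iper F" using n x unfolding Iper_def unitI_def periodic_pt_def by auto
    then show False using x by simp
  qed
  then show ?thesis using Fx unfolding Inp_def unitI_def by auto
qed

lemma zero_Inp: "0 \<in> Inp F"
proof -
  have "cidx N 0 = 0" unfolding cidx_def by simp
  moreover have "0 \<in> orb N" unfolding orb_def by (metis funpow_0 rangeI)
  ultimately show ?thesis unfolding Inp_char by simp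
qed

lemma Inp_preimage: assumes "y \<in> Inp F - {0}" shows "\<exists>!x. x \<in> Inp F \<and> F x = y"
proof -
  have y: "0 < y" "y < 1" "y \<notin> Iper F" using assms unfolding Inp_def unitI_def by auto
  obtain x where x: "0 \<le> x" "x < 1" "F x = y" using F_surj y by blast
  have "x \<notin> Iper F" using F_Iper x(3) y(3) by blast
  then have xi: "x \<in> Inp F" using x unfolding Inp_def unitI_def by auto
  have "x' = x" if "x' \<in> Inp F" "F x' = y" for x'
  proof -
    have "x' \<in> {0..<1}" using that unfolding Inp_def unitI_def by auto
    then show ?thesis using F_inj x that by (metis atLeastLessThan_iff inj_onD)
  qed
  then show ?thesis using xi x by blast
qed

lemma minimal: "minimal_on (Inp F) F"
  unfolding minimal_on_def
proof (intro conjI ballI subsetI)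
  show "y \<in> Inp F" if "y \<in> F ` Inp F" for y using that F_Inp by auto
next
  fix x y assume x: "x \<in> Inp F" and y: "y \<in> Inp F"
  show "y \<in> closure (range (\<lambda>n. (F^^n) x))"
    unfolding closure_approachable
  proof (intro allI impI)
    fix e :: real assume "e > 0"
    have x': "0 \<le> x" "x < 1" "cidx N x \<in> orb N" using x unfolding Inp_char by auto
    have y': "0 \<le> y" "y < 1" "cidx N y \<in> orb N" using y unfolding Inp_char by auto
    obtain t where "dist ((F^^t) x) y < e" using dense[OF x' y' \<open>e > 0\<close>] by blast
    then show "\<exists>z\<in>range (\<lambda>n. (F^^n) x). dist z y < e" by blast
  qed
qed

lemma periods_finite: "finite {p. \<exists>x\<in>Iper F. min_period F x = p}"
proof -
  have "{p. \<exists>x\<in>Iper F. min_period F x = p} \<subseteq> perk ` {..<2^N}"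
  proof
    fix p assume "p \<in> {p. \<exists>x\<in>Iper F. min_period F x = p}"
    then obtain x where x: "x \<in> Iper F" "min_period F x = p" by auto
    have "cidx N x < 2^N" using x(1) Iper_sub cidx_lt by auto
    then show "p \<in> perk ` {..<2^N}" using minper[OF x(1)] x(2) by auto
  qed
  then show ?thesis by (rule finite_subset) simp
qed

end



context rot begin

lemma pi_bounds: assumes "periodic_interval F x y" shows "0 \<le> x" "x < 1" "y \<le> 1"
proof -
  have xy: "x < y" "{x..<y} \<subseteq> Iper F" using assms unfolding periodic_interval_def by auto
  then have "x \<in> Iper F" by auto
  then show "0 \<le> x" "x < 1" using Iper_sub by auto
  show "y \<le> 1"
  proof (rule ccontr)
    assume "\<not> y \<le> 1"
    then have "1 \<in> {x..<y}" using \<open>x < 1\<close> by auto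
    then have "(1::real) \<in> Iper F" using xy by blast
    then have "(1::real) \<in> {0..<1}" using Iper_sub by blast
    then show False by simp
  qed
qed

lemma cell_Iper: assumes "k < 2^N" "k \<notin> orb N" "cell N k u" shows "u \<in> Iper F" "min_period F u = perk k"
proof -
  have u: "0 \<le> u" "u < 1" using assms cell_nonneg cell_lt1 by auto
  have "cidx N u = k" using cell_cidx assms(3) .
  then show "u \<in> Iper F" using u assms Iper_char by auto
  then show "min_period F u = perk k" using minper \<open>cidx N u = k\<close> by simp
qed

lemma saturate: assumes "periodic_interval F x y"
  shows "\<exists>a b. a < b \<and> b \<le> 2^N \<and> {x..<y} \<subseteq> {real a / 2^N..<real b / 2^N} \<and>
    periodic_interval F (real a / 2^N) (real b / 2^N)"
proof -
  have xy0: "x < y \<and> {x..<y} \<subseteq> Iper F \<and> (\<forall>u\<in>{x..<y}. \<forall>v\<in>{x..<y}. min_period F u = min_period F v)"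
    using assms unfolding periodic_interval_def .
  have xy: "x < y" "{x..<y} \<subseteq> Iper F" "\<forall>u\<in>{x..<y}. \<forall>v\<in>{x..<y}. min_period F u = min_period F v"
    using conjunct1[OF xy0] conjunct1[OF conjunct2[OF xy0]] conjunct2[OF conjunct2[OF xy0]] by - (assumption)+
  have x: "0 \<le> x" "x < 1" "y \<le> 1" using pi_bounds[OF assms] by auto
  define a where "a = cidx N x"
  have ca: "cell N a x" unfolding a_def using cidx_cell x by blast
  define b where "b = nat \<lceil>2^N * y\<rceil>"
  have ypos: "0 < 2^N * y" using x xy by simp
  have bre: "real b = of_int \<lceil>2^N * y\<rceil>" unfolding b_def using ypos by simp
  have yb: "2^N * y \<le> real b" unfolding bre by (rule le_of_int_ceiling)
  have "\<lceil>2^N * y\<rceil> \<le> 2^N" using x(3) by (simp add: ceiling_le_iff)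
  then have b2: "b \<le> 2^N" unfolding b_def by (simp add: nat_le_iff)
  have ab: "a < b"
  proof -
    have "real a \<le> 2^N * x" using ca unfolding cell_iff by simp
    also have "\<dots> < 2^N * y" using xy by simp
    finally show ?thesis using yb by simp
  qed
  have sub: "{x..<y} \<subseteq> {real a / 2^N..<real b / 2^N}"
  proof -
    have "real a / 2^N \<le> x" using ca unfolding cell_def by simp
    moreover have "y \<le> real b / 2^N" using yb by (simp add: field_simps)
    ultimately show ?thesis by auto
  qed
  have key: "z \<in> Iper F \<and> min_period F z = min_period F x" if z: "z \<in> {real a / 2^N..<real b / 2^N}" for z
  proof -
    have "0 \<le> real a / 2^N" by simp
    moreover have "real a / 2^N \<le> z" using z by simp
    ultimately have z0: "0 \<le> z" by linarith
    have "real b / 2^N \<le> 1" using b2 by (simp add: field_simps)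
    moreover have "z < real b / 2^N" using z by simp
    ultimately have z1: "z < 1" by linarith
    define c where "c = cidx N z"
    have cz: "cell N c z" unfolding c_def using cidx_cell z0 by blast
    have "real_of_int (int a) / 2^N \<le> z" using z by simp
    then have ac: "a \<le> c" using grid_le[OF cz, of "int a"] by simp
    have "z < real_of_int (int b) / 2^N" using z by simp
    then have cb: "c < b" using grid_less[OF cz, of "int b"] by simp
    have clt: "c < 2^N" using cb b2 by simp
    have "int c < \<lceil>2^N * y\<rceil>" using cb unfolding b_def by simp
    then have cy: "real c < 2^N * y" by (simp add: less_ceiling_iff)
    define w where "w = max x (real c / 2^N)"
    have cy': "real c / 2^N < y" using cy by (simp add: divide_less_eq mult.commute)
    have wxy: "w \<in> {x..<y}" unfolding w_def using xy(1) cy' by simp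
    have "x < (real a + 1) / 2^N" using ca unfolding cell_def by simp
    also have "\<dots> \<le> (real c + 1) / 2^N" using ac by (simp add: divide_right_mono)
    finally have xc: "x < (real c + 1) / 2^N" .
    have "real c / 2^N < (real c + 1)/2^N" by (simp add: divide_strict_right_mono)
    then have "cell N c w" unfolding w_def cell_def using xc by simp
    then have cw: "cidx N w = c" by (rule cell_cidx)
    have wI: "w \<in> Iper F" using wxy xy(2) by auto
    then have cno: "c \<notin> orb N" using Iper_char cw by auto
    have "z \<in> Iper F" "min_period F z = perk c" using cell_Iper[OF clt cno cz] by auto
    moreover have "min_period F w = perk c" using minper[OF wI] cw by simp
    moreover have "min_period F w = min_period F x"
    proof -
      have "x \<in> {x..<y}" using xy(1) by simp
      then show ?thesis using bspec[OF bspec[OF xy(3) wxy]] by simp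
    qed
    ultimately show ?thesis by simp
  qed
  have "periodic_interval F (real a / 2^N) (real b / 2^N)"
    unfolding periodic_interval_def using key ab by (auto simp: divide_strict_right_mono)
  then show ?thesis using ab b2 sub by blast
qed

lemma max_grid: assumes "max_periodic_interval F x y"
  shows "\<exists>i j. i < j \<and> j \<le> 2^N \<and> x = real i / 2^N \<and> y = real j / 2^N"
proof -
  have p: "periodic_interval F x y" using assms unfolding max_periodic_interval_def by simp
  obtain a b where ab: "a < b" "b \<le> 2^N" "{x..<y} \<subseteq> {real a / 2^N..<real b / 2^N}"
    "periodic_interval F (real a / 2^N) (real b / 2^N)" using saturate[OF p] by blast
  then have eq: "{real a / 2^N..<real b / 2^N} = {x..<y}" using assms unfolding max_periodic_interval_def by blast
  have "x < y" using p unfolding periodic_interval_def by simp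
  moreover have "real a / 2^N < real b / 2^N" using ab by (simp add: divide_strict_right_mono)
  ultimately have "real a / 2^N = x" "real b / 2^N = y" using atLeastLessThan_inj[OF eq] by auto
  then show ?thesis using ab by blast
qed

lemma cover: assumes "z \<in> Iper F" shows "\<exists>x y. max_periodic_interval F x y \<and> z \<in> {x..<y}"
proof -
  have z: "0 \<le> z" "z < 1" "cidx N z \<notin> orb N" using assms Iper_char by auto
  define k where "k = cidx N z"
  have ck: "cell N k z" unfolding k_def using cidx_cell z by blast
  have klt: "k < 2^N" unfolding k_def using cidx_lt z by blast
  define G where "G = {(i,j). i \<le> k \<and> k < j \<and> j \<le> 2^N \<and> periodic_interval F (real i / 2^N) (real j / 2^N)}"
  have "periodic_interval F (real k / 2^N) (real (k+1) / 2^N)"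
  proof -
    have "u \<in> Iper F \<and> min_period F u = perk k" if "u \<in> {real k / 2^N..<real (k+1) / 2^N}" for u
    proof -
      have "cell N k u" using that unfolding cell_def by (simp add: add.commute)
      then show ?thesis using cell_Iper[OF klt z(3)[folded k_def]] by auto
    qed
    then show ?thesis unfolding periodic_interval_def by (auto simp: divide_strict_right_mono)
  qed
  then have kG: "(k, k+1) \<in> G" unfolding G_def using klt by auto
  have bnd: "\<forall>p. p \<in> G \<longrightarrow> snd p - fst p < 2^N + 1" unfolding G_def by auto
  obtain p where p: "p \<in> G" "\<forall>p'. p' \<in> G \<longrightarrow> snd p' - fst p' \<le> snd p - fst p"
    using ex_has_greatest_nat[of "\<lambda>p. p \<in> G" "(k,k+1)" "\<lambda>p. snd p - fst p" "2^N+1"] kG bnd by blast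
  obtain i j where ij: "p = (i,j)" by (cases p)
  have G_ij: "i \<le> k" "k < j" "j \<le> 2^N" "periodic_interval F (real i / 2^N) (real j / 2^N)"
    using p(1) unfolding ij G_def by auto
  have maxp: "b - a \<le> j - i" if "(a,b) \<in> G" for a b using p(2) that unfolding ij by fastforce
  have "max_periodic_interval F (real i / 2^N) (real j / 2^N)"
    unfolding max_periodic_interval_def
  proof (intro conjI allI impI)
    show "periodic_interval F (real i / 2^N) (real j / 2^N)" using G_ij by simp
  next
    fix x' y' assume h: "periodic_interval F x' y' \<and> {real i / 2^N..<real j / 2^N} \<subseteq> {x'..<y'}"
    obtain a b where ab: "a < b" "b \<le> 2^N" "{x'..<y'} \<subseteq> {real a / 2^N..<real b / 2^N}"
      "periodic_interval F (real a / 2^N) (real b / 2^N)" using saturate h by blast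
    have ijlt: "real i / 2^N < real j / 2^N" using G_ij by (simp add: divide_strict_right_mono)
    have "{real i / 2^N..<real j / 2^N} \<subseteq> {real a / 2^N..<real b / 2^N}" using h ab(3) by blast
    then have "real a / 2^N \<le> real i / 2^N" "real j / 2^N \<le> real b / 2^N"
      using atLeastLessThan_subset_iff ijlt by (metis not_le)+
    then have ai: "a \<le> i" and jb: "j \<le> b" by (simp_all add: divide_le_cancel)
    have "(a,b) \<in> G" unfolding G_def using ai jb G_ij ab by auto
    then have "b - a \<le> j - i" by (rule maxp)
    then have "a = i" "b = j" using ai jb G_ij(1,2) by arith+
    then show "{x'..<y'} = {real i / 2^N..<real j / 2^N}" using h ab(3) by auto
  qed
  moreover have "z \<in> {real i / 2^N..<real j / 2^N}"
  proof -
    have "real i / 2^N \<le> real k / 2^N" using G_ij by (simp add: divide_right_mono)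
    moreover have "(real k + 1) / 2^N \<le> real j / 2^N" using G_ij by (simp add: divide_right_mono)
    ultimately show ?thesis using ck unfolding cell_def by auto
  qed
  ultimately show ?thesis by blast
qed

lemma intervals: "\<exists>P. finite P \<and> (\<forall>(x,y)\<in>P. max_periodic_interval F x y \<and> x \<in> unitI \<and> y \<le> 1) \<and>
                Iper F = (\<Union>(x,y)\<in>P. {x..<y})"
proof -
  define P where "P = {(x,y). max_periodic_interval F x y}"
  have "P \<subseteq> (\<lambda>(i,j). (real i / 2^N, real j / 2^N)) ` ({..(2::nat)^N} \<times> {..(2::nat)^N})"
  proof
    fix p assume "p \<in> P"
    then obtain x y where p: "p = (x,y)" "max_periodic_interval F x y" unfolding P_def by auto
    then obtain i j where "i < j" "j \<le> 2^N" "x = real i / 2^N" "y = real j / 2^N" using max_grid by blast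
    then show "p \<in> (\<lambda>(i,j). (real i / 2^N, real j / 2^N)) ` ({..(2::nat)^N} \<times> {..(2::nat)^N})"
      unfolding p by (intro image_eqI[of _ _ "(i,j)"]) auto
  qed
  then have fin: "finite P" by (rule finite_subset) simp
  have props: "\<forall>(x,y)\<in>P. max_periodic_interval F x y \<and> x \<in> unitI \<and> y \<le> 1"
  proof
    fix p assume "p \<in> P"
    then obtain x y where p: "p = (x,y)" "max_periodic_interval F x y" unfolding P_def by blast
    have pi: "periodic_interval F x y" using p(2) unfolding max_periodic_interval_def by (rule conjunct1)
    show "case p of (x,y) \<Rightarrow> max_periodic_interval F x y \<and> x \<in> unitI \<and> y \<le> 1"
      using p pi_bounds[OF pi] unfolding unitI_def by simp
  qed
  have "Iper F = (\<Union>(x,y)\<in>P. {x..<y})"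
  proof
    show "Iper F \<subseteq> (\<Union>(x,y)\<in>P. {x..<y})"
    proof
      fix z assume "z \<in> Iper F"
      then obtain x y where "max_periodic_interval F x y" "z \<in> {x..<y}" using cover by blast
      then show "z \<in> (\<Union>(x,y)\<in>P. {x..<y})" unfolding P_def by blast
    qed
    show "(\<Union>(x,y)\<in>P. {x..<y}) \<subseteq> Iper F"
    proof
      fix z assume "z \<in> (\<Union>(x,y)\<in>P. {x..<y})"
      then obtain x y where "(x,y) \<in> P" "z \<in> {x..<y}" by blast
      then have "max_periodic_interval F x y" unfolding P_def by simp
      then have "periodic_interval F x y" unfolding max_periodic_interval_def by (rule conjunct1)
      then have "{x..<y} \<subseteq> Iper F" unfolding periodic_interval_def by simp
      then show "z \<in> Iper F" using \<open>z \<in> {x..<y}\<close> by blast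
    qed
  qed
  then show ?thesis using fin props by blast
qed

end


theorem theorem1p6:
  fixes N q :: nat and \<pi> :: "nat \<Rightarrow> nat"
  assumes "N \<ge> 1" and "q = 2 ^ N" and "\<pi> permutes {..<q}"
  defines "F \<equiv> Frot q \<pi>"
  shows "((\<forall>x\<in>Iper F. periodic_pt F x) \<and> F ` Iper F \<subseteq> Iper F \<and> bij_betw F (Iper F) (Iper F)) \<and>
         (Iper F \<noteq> {} \<longrightarrow>
           (\<exists>P. finite P \<and> (\<forall>(x,y)\<in>P. max_periodic_interval F x y \<and> x \<in> unitI \<and> y \<le> 1) \<and>
                Iper F = (\<Union>(x,y)\<in>P. {x..<y}))) \<and>
         finite {p. \<exists>x\<in>Iper F. min_period F x = p} \<and>
         (0 \<in> Inp F \<and> F ` Inp F \<subseteq> Inp F \<and> (\<forall>y\<in>Inp F - {0}. \<exists>!x. x \<in> Inp F \<and> F x = y)) \<and>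
         minimal_on (Inp F) F"
proof -
  interpret r: rot N q \<pi> using assms(1-3) by (rule rot.intro)
  have a1: "\<forall>x\<in>Iper (Frot q \<pi>). periodic_pt (Frot q \<pi>) x" unfolding Iper_def by auto
  have a2: "Frot q \<pi> ` Iper (Frot q \<pi>) \<subseteq> Iper (Frot q \<pi>)" using r.F_Iper by auto
  have a3: "Frot q \<pi> ` Inp (Frot q \<pi>) \<subseteq> Inp (Frot q \<pi>)" using r.F_Inp by auto
  have a4: "\<forall>y\<in>Inp (Frot q \<pi>) - {0}. \<exists>!x. x \<in> Inp (Frot q \<pi>) \<and> Frot q \<pi> x = y"
    using r.Inp_preimage by (rule ballI)
  show ?thesis unfolding F_def
  proof (intro conjI impI)
    show "\<forall>x\<in>Iper (Frot q \<pi>). periodic_pt (Frot q \<pi>) x" by (rule a1)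
    show "Frot q \<pi> ` Iper (Frot q \<pi>) \<subseteq> Iper (Frot q \<pi>)" by (rule a2)
    show "bij_betw (Frot q \<pi>) (Iper (Frot q \<pi>)) (Iper (Frot q \<pi>))" by (rule r.bij_Iper)
    show "\<exists>P. finite P \<and> (\<forall>(x,y)\<in>P. max_periodic_interval (Frot q \<pi>) x y \<and> x \<in> unitI \<and> y \<le> 1) \<and>
                Iper (Frot q \<pi>) = (\<Union>(x,y)\<in>P. {x..<y})" by (rule r.intervals)
    show "finite {p. \<exists>x\<in>Iper (Frot q \<pi>). min_period (Frot q \<pi>) x = p}" by (rule r.periods_finite)
    show "0 \<in> Inp (Frot q \<pi>)" by (rule r.zero_Inp)
    show "Frot q \<pi> ` Inp (Frot q \<pi>) \<subseteq> Inp (Frot q \<pi>)" by (rule a3)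
    show "\<forall>y\<in>Inp (Frot q \<pi>) - {0}. \<exists>!x. x \<in> Inp (Frot q \<pi>) \<and> Frot q \<pi> x = y" by (rule a4)
    show "minimal_on (Inp (Frot q \<pi>)) (Frot q \<pi>)" by (rule r.minimal)
  qed
qed

end
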